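(* Let $n\ge 2$ and let $g=(g_1,\dots,g_{n-1},0)$ be a smooth compactly supported vector field on $\mathbb{R}^{n-1}$. Then there exists a smooth divergence-free vector field $\phi=(\phi_1,\dots,\phi_n)$ on $\overline{\mathbb{R}^n_+}$, with compact support in $\overline{\mathbb{R}^n_+}$, such that $\phi|_{x_n=0}=0$ and $\frac{\partial\phi}{\partial x_n}\big|_{x_n=0}=g$.
   Context: $\mathbb{R}^n_+=\{x=(x',x_n)\in\mathbb{R}^n: x_n>0\}$, and $\mathbb{R}^{n-1}$ is identified with the boundary $\{x_n=0\}$. *)

theory Defs
  imports "HOL-Analysis.Analysis"
begin

definition pderiv_dir :: "('a::euclidean_space \<Rightarrow> 'b::euclidean_space) \<Rightarrow> 'a \<Rightarrow> 'a \<Rightarrow> 'b" where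
  "pderiv_dir f x v = frechet_derivative f (at x) v"

fun Ck :: "nat \<Rightarrow> ('a::euclidean_space \<Rightarrow> 'b::euclidean_space) \<Rightarrow> bool" where
  "Ck 0 f = continuous_on UNIV f"
| "Ck (Suc k) f = ((\<forall>x. f differentiable (at x)) \<and> continuous_on UNIV f \<and>
      (\<forall>i\<in>Basis. Ck k (\<lambda>x. pderiv_dir f x i)))"

definition smooth :: "('a::euclidean_space \<Rightarrow> 'b::euclidean_space) \<Rightarrow> bool" where
  "smooth f = (\<forall>k. Ck k f)"

definition divergence :: "('a::euclidean_space \<Rightarrow> 'a) \<Rightarrow> 'a \<Rightarrow> real" where
  "divergence f x = (\<Sum>b\<in>Basis. pderiv_dir f x b \<bullet> b)"

end

theory Submission imports Defs "HOL-Computational_Algebra.Polynomial" begin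

declare Ck.simps(2)[simp del]

lemma pd_eq: "(f has_derivative f') (at x) \<Longrightarrow> pderiv_dir f x i = f' i"
  unfolding pderiv_dir_def using frechet_derivative_at by metis

lemma Ck_diff: "Ck (Suc k) f \<Longrightarrow> f differentiable (at x)" by (simp add: Ck.simps(2))
lemma Ck_pd: "Ck (Suc k) f \<Longrightarrow> i \<in> Basis \<Longrightarrow> Ck k (\<lambda>x. pderiv_dir f x i)" by (simp add: Ck.simps(2))

lemma Ck_has_der: "Ck (Suc k) f \<Longrightarrow> (f has_derivative (\<lambda>v. pderiv_dir f x v)) (at x)"
  unfolding pderiv_dir_def using frechet_derivative_works Ck_diff by blast

lemma Ck_mono: "Ck (Suc k) f \<Longrightarrow> Ck k f"
proof (induction k arbitrary: f)
  case 0 then show ?case by (simp add: Ck.simps(2))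
next
  case (Suc k)
  have "(\<forall>x. f differentiable (at x)) \<and> continuous_on UNIV f \<and>
      (\<forall>i\<in>Basis. Ck (Suc k) (\<lambda>x. pderiv_dir f x i))" using Suc.prems by (subst (asm) Ck.simps(2))
  then show ?case using Suc.IH by (subst Ck.simps(2)) blast
qed


lemma smooth_iff: "smooth f \<longleftrightarrow> (\<forall>k. Ck k f)" by (simp add: smooth_def)

lemma Ck_SucI:
  assumes "\<And>x. (f has_derivative D x) (at x)"
    and "\<And>i. i \<in> Basis \<Longrightarrow> Ck k (\<lambda>x. D x i)"
  shows "Ck (Suc k) f"
proof -
  have d: "\<And>x. f differentiable (at x)" using assms(1) by (auto simp: differentiable_def)
  have c: "continuous_on UNIV f"
    using d by (simp add: differentiable_imp_continuous_within continuous_at_imp_continuous_on)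
  have "\<And>i. (\<lambda>x. pderiv_dir f x i) = (\<lambda>x. D x i)" using pd_eq assms(1) by blast
  then show ?thesis using d c assms(2) by (simp add: Ck.simps(2))
qed

lemma Ck_const: "Ck k (\<lambda>x. c)"
proof (induction k arbitrary: c)
  case 0 then show ?case by simp
next
  case (Suc k)
  show ?case by (rule Ck_SucI[where D="\<lambda>x v. 0"]) (auto intro: Suc)
qed

lemma Ck_linear: "bounded_linear L \<Longrightarrow> Ck k L"
proof (induction k)
  case 0 then show ?case by (simp add: linear_continuous_on)
next
  case (Suc k)
  show ?case by (rule Ck_SucI[where D="\<lambda>x v. L v"]) (auto intro: Ck_const bounded_linear.has_derivative[OF Suc.prems])
qed

lemma Ck_add: "Ck k f \<Longrightarrow> Ck k g \<Longrightarrow> Ck k (\<lambda>x. f x + g x)"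
proof (induction k arbitrary: f g)
  case 0 then show ?case by (simp add: continuous_on_add)
next
  case (Suc k)
  show ?case
    by (rule Ck_SucI[where D="\<lambda>x v. pderiv_dir f x v + pderiv_dir g x v"])
      (use Suc in \<open>auto intro!: has_derivative_add Ck_has_der Ck_pd\<close>)
qed

lemma Ck_sum: "finite A \<Longrightarrow> (\<And>a. a \<in> A \<Longrightarrow> Ck k (f a)) \<Longrightarrow> Ck k (\<lambda>x. \<Sum>a\<in>A. f a x)"
proof (induction A rule: finite_induct)
  case empty then show ?case by (simp add: Ck_const)
next
  case (insert a A)
  then have "Ck k (\<lambda>x. f a x + (\<Sum>a\<in>A. f a x))" by (intro Ck_add) auto
  then show ?case using insert by simp
qed

lemma Ck_lin_out: fixes f :: "'a::euclidean_space \<Rightarrow> 'b::euclidean_space" and L :: "'b \<Rightarrow> 'c::euclidean_space"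
  shows "bounded_linear L \<Longrightarrow> Ck k f \<Longrightarrow> Ck k (\<lambda>x. L (f x))"
proof (induction k arbitrary: f)
  case 0 then show ?case
    using continuous_on_compose[OF 0(2)[unfolded Ck.simps(1)] linear_continuous_on[OF 0(1)]]
    by (simp add: o_def)
next
  case (Suc k)
  show ?case
  proof (rule Ck_SucI[where D="\<lambda>x v. L (pderiv_dir f x v)"])
    fix x show "((\<lambda>x. L (f x)) has_derivative (\<lambda>v. L (pderiv_dir f x v))) (at x)"
      by (rule bounded_linear.has_derivative[OF Suc.prems(1) Ck_has_der[OF Suc.prems(2)]])
  next
    fix i :: 'a assume i: "i \<in> Basis"
    show "Ck k (\<lambda>x. L (pderiv_dir f x i))" by (rule Suc.IH[OF Suc.prems(1) Ck_pd[OF Suc.prems(2) i]])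
  qed
qed

lemma Ck_scaleR: fixes f :: "'a::euclidean_space \<Rightarrow> 'b::euclidean_space" and a :: "'a \<Rightarrow> real"
  shows "Ck k a \<Longrightarrow> Ck k f \<Longrightarrow> Ck k (\<lambda>x. a x *\<^sub>R f x)"
proof (induction k arbitrary: a f)
  case 0 then show ?case by (simp add: continuous_on_scaleR)
next
  case (Suc k)
  show ?case
  proof (rule Ck_SucI[where D="\<lambda>x v. a x *\<^sub>R pderiv_dir f x v + pderiv_dir a x v *\<^sub>R f x"])
    fix x show "((\<lambda>x. a x *\<^sub>R f x) has_derivative (\<lambda>v. a x *\<^sub>R pderiv_dir f x v + pderiv_dir a x v *\<^sub>R f x)) (at x)"
      using has_derivative_scaleR[OF Ck_has_der[OF Suc.prems(1)] Ck_has_der[OF Suc.prems(2)]] by simp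
  next
    fix i :: 'a assume i: "i \<in> Basis"
    show "Ck k (\<lambda>x. a x *\<^sub>R pderiv_dir f x i + pderiv_dir a x i *\<^sub>R f x)"
      by (rule Ck_add[OF Suc.IH[OF Ck_mono[OF Suc.prems(1)] Ck_pd[OF Suc.prems(2) i]] Suc.IH[OF Ck_pd[OF Suc.prems(1) i] Ck_mono[OF Suc.prems(2)]]])
  qed
qed

lemma Ck_lin_in: fixes f :: "'a::euclidean_space \<Rightarrow> 'b::euclidean_space" and L :: "'c::euclidean_space \<Rightarrow> 'a"
  shows "bounded_linear L \<Longrightarrow> Ck k f \<Longrightarrow> Ck k (\<lambda>x. f (c + L x))"
proof (induction k arbitrary: f)
  case 0 then show ?case
  proof -
    have "continuous_on UNIV (\<lambda>x. c + L x)"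
      by (intro continuous_intros linear_continuous_on 0(1))
    from continuous_on_compose[OF this continuous_on_subset[OF 0(2)[unfolded Ck.simps(1)]]]
    show ?thesis by (simp add: o_def)
  qed
next
  case (Suc k)
  have e: "\<And>x v. pderiv_dir f (c + L x) (L v) = (\<Sum>b\<in>Basis. (L v \<bullet> b) *\<^sub>R pderiv_dir f (c + L x) b)"
  proof -
    fix x v
    have lin: "linear (pderiv_dir f (c + L x))"
      using Ck_has_der[OF Suc.prems(2)] has_derivative_linear by blast
    have "pderiv_dir f (c + L x) (L v) = pderiv_dir f (c + L x) (\<Sum>b\<in>Basis. (L v \<bullet> b) *\<^sub>R b)"
      by (simp only: euclidean_representation)
    also have "\<dots> = (\<Sum>b\<in>Basis. pderiv_dir f (c + L x) ((L v \<bullet> b) *\<^sub>R b))"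
      by (rule linear_sum[OF lin])
    also have "\<dots> = (\<Sum>b\<in>Basis. (L v \<bullet> b) *\<^sub>R pderiv_dir f (c + L x) b)"
      by (simp add: linear_scale[OF lin])
    finally show "?thesis x v" .
  qed
  show ?case
  proof (rule Ck_SucI[where D="\<lambda>x v. pderiv_dir f (c + L x) (L v)"])
    fix x
    show "((\<lambda>x. f (c + L x)) has_derivative (\<lambda>v. pderiv_dir f (c + L x) (L v))) (at x)"
      using has_derivative_compose[OF has_derivative_add[OF has_derivative_const bounded_linear.has_derivative[OF Suc.prems(1) has_derivative_ident]] Ck_has_der[OF Suc.prems(2)]]
      by (simp add: o_def)
  next
    fix i :: 'c assume "i \<in> Basis"
    show "Ck k (\<lambda>x. pderiv_dir f (c + L x) (L i))"
      unfolding e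
      by (rule Ck_sum) (auto intro!: Ck_scaleR Ck_const Suc.IH[OF Suc.prems(1) Ck_pd[OF Suc.prems(2)]])
  qed
qed


definition S :: "real poly \<Rightarrow> real \<Rightarrow> real" where
  "S p t = (if t > 0 then poly p (inverse t) * exp (- inverse t) else 0)"

lemma lim_poly_exp: fixes p :: "real poly" shows "((\<lambda>u. poly p u * exp (- u)) \<longlongrightarrow> 0) at_top"
proof -
  have "((\<lambda>u. \<Sum>i\<le>degree p. coeff p i * (u ^ i / exp u)) \<longlongrightarrow> (\<Sum>i\<le>degree p. coeff p i * 0)) at_top"
    by (intro tendsto_sum tendsto_mult tendsto_const tendsto_power_div_exp_0)
  then show ?thesis
    by (simp add: poly_altdef sum_divide_distrib exp_minus field_simps)
qed

lemma lim_S: fixes p :: "real poly" shows "((\<lambda>t. poly p (inverse t) * exp (- inverse t)) \<longlongrightarrow> 0) (at_right 0)"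
  using filterlim_compose[OF lim_poly_exp filterlim_inverse_at_top_right] by (simp add: o_def)

lemma S_der0: "(S p has_field_derivative 0) (at 0)"
  unfolding has_field_derivative_iff
proof (rule filterlim_split_at)
  show "((\<lambda>y. (S p y - S p 0) / (y - 0)) \<longlongrightarrow> 0) (at_left 0)"
  proof (rule tendsto_eventually)
    show "\<forall>\<^sub>F y in at_left 0. (S p y - S p 0) / (y - 0) = 0"
      using eventually_at_left_real[of "-1" 0] by (rule eventually_mono) (auto simp: S_def)
  qed
  have ev: "\<forall>\<^sub>F y in at_right 0. poly (pCons 0 p) (inverse y) * exp (- inverse y) = (S p y - S p 0) / (y - 0)"
    using eventually_at_right_real[of 0 1] by (rule eventually_mono) (auto simp: S_def field_simps)
  show "((\<lambda>y. (S p y - S p 0) / (y - 0)) \<longlongrightarrow> 0) (at_right 0)"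
    by (rule Lim_transform_eventually[OF lim_S ev])
qed

definition Sq :: "real poly \<Rightarrow> real poly" where
  "Sq p = [:0,0,1:] * (p - pderiv p)"

lemma S_der_pos:
  assumes "t > 0"
  shows "(S p has_field_derivative S (Sq p) t) (at t)"
proof -
  have d: "((\<lambda>t. poly p (inverse t) * exp (- inverse t)) has_field_derivative
     (poly (pderiv p) (inverse t) * (- inverse (t^2)) * exp (- inverse t) +
      poly p (inverse t) * (exp (- inverse t) * inverse (t^2)))) (at t)"
    using assms
    by (auto intro!: derivative_eq_intros DERIV_chain2[OF poly_DERIV] simp: power2_eq_square field_simps)
  have "(S p has_field_derivative
     (poly (pderiv p) (inverse t) * (- inverse (t^2)) * exp (- inverse t) +
      poly p (inverse t) * (exp (- inverse t) * inverse (t^2)))) (at t)"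
    by (rule has_field_derivative_transform_within_open[OF d, of "{0<..}"]) (use assms in \<open>auto simp: S_def\<close>)
  moreover have "(poly (pderiv p) (inverse t) * (- inverse (t^2)) * exp (- inverse t) +
      poly p (inverse t) * (exp (- inverse t) * inverse (t^2))) = S (Sq p) t"
    using assms by (simp add: S_def Sq_def algebra_simps power2_eq_square)
  ultimately show ?thesis by simp
qed

lemma S_der: "(S p has_field_derivative S (Sq p) t) (at t)"
proof (cases "t > 0")
  case True then show ?thesis by (rule S_der_pos)
next
  case False
  show ?thesis
  proof (cases "t = 0")
    case True then show ?thesis using S_der0[of p] by (simp add: S_def)
  next
    case False
    then have "t < 0" using \<open>\<not> t > 0\<close> by simp
    have "((\<lambda>_. 0) has_field_derivative 0) (at t)" by simp
    then have "(S p has_field_derivative 0) (at t)"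
      by (rule has_field_derivative_transform_within_open[of _ _ _ "{..<0}"]) (use \<open>t<0\<close> in \<open>auto simp: S_def\<close>)
    then show ?thesis using \<open>t<0\<close> by (simp add: S_def)
  qed
qed

lemma real_lin: "linear (D :: real \<Rightarrow> real) \<Longrightarrow> D h = h * D 1"
  using linear_scale[of D h 1] by simp

lemma Ck_real_SucI:
  fixes f :: "real \<Rightarrow> real"
  assumes "\<And>x. (f has_field_derivative f' x) (at x)" "Ck k f'"
  shows "Ck (Suc k) f"
proof (rule Ck_SucI[where D="\<lambda>x v. f' x * v"])
  fix x show "(f has_derivative (\<lambda>v. f' x * v)) (at x)"
    using assms(1)[of x] by (simp add: has_field_derivative_def)
next
  fix i :: real assume "i \<in> Basis"
  then have "i = 1" by simp
  then show "Ck k (\<lambda>x. f' x * i)" using assms(2) by simp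
qed

lemma Ck_S: "Ck k (S p)"
proof (induction k arbitrary: p)
  case 0
  have "continuous_on UNIV (S p)"
    using S_der by (meson DERIV_isCont continuous_at_imp_continuous_on)
  then show ?case by simp
next
  case (Suc k) then show ?case by (intro Ck_real_SucI[OF S_der]) 
qed

lemma S_one_pos: "t > 0 \<Longrightarrow> S 1 t = exp (- inverse t)" by (simp add: S_def)
lemma S_nonpos: "t \<le> 0 \<Longrightarrow> S p t = 0" by (simp add: S_def)


lemma hd: "f differentiable (at x) \<Longrightarrow> (f has_derivative (\<lambda>v. pderiv_dir f x v)) (at x)"
  unfolding pderiv_dir_def using frechet_derivative_works by blast

lemma sm_diff: "(\<And>k. Ck k f) \<Longrightarrow> f differentiable (at x)"
  using Ck_diff[of 0 f] by blast

lemma pd_add: "f differentiable (at x) \<Longrightarrow> g differentiable (at x) \<Longrightarrow>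
  pderiv_dir (\<lambda>x. f x + g x) x v = pderiv_dir f x v + pderiv_dir g x v"
  by (rule pd_eq[OF has_derivative_add[OF hd hd]])

lemma pd_scaleR: "a differentiable (at x) \<Longrightarrow> f differentiable (at x) \<Longrightarrow>
  pderiv_dir (\<lambda>x. a x *\<^sub>R f x) x v = a x *\<^sub>R pderiv_dir f x v + pderiv_dir a x v *\<^sub>R f x"
  by (rule pd_eq[OF has_derivative_scaleR[OF hd hd]])

lemma pd_mult: fixes a f :: "'a::euclidean_space \<Rightarrow> real"
  shows "a differentiable (at x) \<Longrightarrow> f differentiable (at x) \<Longrightarrow>
  pderiv_dir (\<lambda>x. a x * f x) x v = a x * pderiv_dir f x v + pderiv_dir a x v * f x"
  using pd_scaleR[of a x f v] by simp

lemma pd_lin_out: "bounded_linear L \<Longrightarrow> f differentiable (at x) \<Longrightarrow>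
  pderiv_dir (\<lambda>x. L (f x)) x v = L (pderiv_dir f x v)"
  by (rule pd_eq[OF bounded_linear.has_derivative[OF _ hd]])

lemma pd_comp: assumes "bounded_linear L" "f differentiable (at (L x))"
  shows "pderiv_dir (\<lambda>x. f (L x)) x v = pderiv_dir f (L x) (L v)"
proof -
  have "((\<lambda>x. f (L x)) has_derivative (\<lambda>v. pderiv_dir f (L x) (L v))) (at x)"
    using has_derivative_compose[OF bounded_linear.has_derivative[OF assms(1) has_derivative_ident] hd[OF assms(2)]]
    by (simp add: o_def)
  then show ?thesis by (rule pd_eq)
qed

lemma pd_ident: "pderiv_dir (\<lambda>x. x) x v = v"
  by (rule pd_eq[OF has_derivative_ident])

lemma pd_const: "pderiv_dir (\<lambda>x. c) x v = 0"
  by (rule pd_eq[OF has_derivative_const])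

lemma pd_linear: "f differentiable (at x) \<Longrightarrow> linear (pderiv_dir f x)"
  using hd has_derivative_linear by fastforce

lemma pd_real: fixes f :: "real \<Rightarrow> 'b::euclidean_space"
  shows "f differentiable (at x) \<Longrightarrow> pderiv_dir f x r = r *\<^sub>R pderiv_dir f x 1"
  using linear_scale[OF pd_linear, of f x r 1] by simp

lemma pd_zero_open: "f differentiable (at x) \<Longrightarrow> open X \<Longrightarrow> x \<in> X \<Longrightarrow> (\<And>y. y \<in> X \<Longrightarrow> f y = 0)
  \<Longrightarrow> pderiv_dir f x v = 0"
  unfolding pderiv_dir_def
  using frechet_derivative_transform_within_open[of f x X "\<lambda>_. 0"] by simp

lemma Ck_comp: "bounded_linear L \<Longrightarrow> Ck k f \<Longrightarrow> Ck k (\<lambda>x. f (L x))"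
  using Ck_lin_in[of L k f 0] by simp

lemma Ck_mult: fixes a f :: "'a::euclidean_space \<Rightarrow> real"
  shows "Ck k a \<Longrightarrow> Ck k f \<Longrightarrow> Ck k (\<lambda>x. a x * f x)"
  using Ck_scaleR[of k a f] by simp

lemma sum_Basis_prod_real:
  fixes f :: "('a::euclidean_space \<times> 'b::euclidean_space) \<Rightarrow> real"
  shows "sum f Basis = sum (\<lambda>i. f (i, 0)) Basis + sum (\<lambda>i. f (0, i)) Basis"
proof -
  have "inj_on (\<lambda>u. (u::'a, 0::'b)) Basis" "inj_on (\<lambda>u. (0::'a, u::'b)) Basis"
    by (auto intro!: inj_onI Pair_inject)
  thus ?thesis
    unfolding Basis_prod_def
    by (subst sum.union_disjoint) (auto simp: Basis_prod_def sum.reindex)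
qed


lemma Psi_exists: "\<exists>\<Psi> :: real \<Rightarrow> real. (\<forall>k. Ck k \<Psi>) \<and> \<Psi> 0 = 0 \<and> pderiv_dir \<Psi> 0 1 = 0
  \<and> pderiv_dir (\<lambda>t. pderiv_dir \<Psi> t 1) 0 1 = 1 \<and> (\<forall>t>1. \<Psi> t = 0 \<and> pderiv_dir \<Psi> t 1 = 0)"
proof -
  define G where "G = (\<lambda>t::real. (exp 1 / 2) * S 1 (1 + - t))"
  have CG: "Ck k G" for k
    unfolding G_def
    by (rule Ck_lin_out[OF bounded_linear_mult_right Ck_lin_in[OF bounded_linear_minus[OF bounded_linear_ident] Ck_S]])
  define sq where "sq = (\<lambda>t::real. t * t)"
  have Cid: "Ck k (\<lambda>t::real. t)" for k by (rule Ck_linear[OF bounded_linear_ident])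
  have Csq: "Ck k sq" for k unfolding sq_def by (rule Ck_mult[OF Cid Cid])
  define \<Psi> where "\<Psi> = (\<lambda>t. sq t * G t)"
  have CP: "Ck k \<Psi>" for k unfolding \<Psi>_def by (rule Ck_mult[OF Csq CG])
  define G1 where "G1 = (\<lambda>t. pderiv_dir G t 1)"
  have CG1: "Ck k G1" for k unfolding G1_def using Ck_pd[OF CG[of "Suc k"], of 1] by simp
  define sq1 where "sq1 = (\<lambda>t::real. t + t)"
  have Csq1: "Ck k sq1" for k unfolding sq1_def by (rule Ck_add[OF Cid Cid])
  have dsq: "pderiv_dir sq t 1 = sq1 t" for t
    unfolding sq_def sq1_def using pd_mult[OF sm_diff[OF Cid] sm_diff[OF Cid], of t 1] by (simp add: pd_ident)
  have dsq1: "pderiv_dir sq1 t 1 = 2" for t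
    unfolding sq1_def using pd_add[OF sm_diff[OF Cid] sm_diff[OF Cid], of t 1] by (simp add: pd_ident)
  have P1: "(\<lambda>t. pderiv_dir \<Psi> t 1) = (\<lambda>t. sq t * G1 t + sq1 t * G t)"
  proof
    fix t show "pderiv_dir \<Psi> t 1 = sq t * G1 t + sq1 t * G t"
      unfolding \<Psi>_def using pd_mult[OF sm_diff[OF Csq] sm_diff[OF CG], of t 1] by (simp add: dsq G1_def)
  qed
  have sq0: "sq 0 = 0" and sq10: "sq1 0 = 0" by (simp_all add: sq_def sq1_def)
  have G0: "G 0 = 1/2" unfolding G_def by (simp add: S_one_pos exp_minus)
  have "pderiv_dir (\<lambda>t. pderiv_dir \<Psi> t 1) 0 1 = pderiv_dir (\<lambda>t. sq t * G1 t) 0 1 + pderiv_dir (\<lambda>t. sq1 t * G t) 0 1"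
    unfolding P1 by (rule pd_add[OF sm_diff sm_diff]) (auto intro: Ck_mult Csq CG1 Csq1 CG)
  also have "\<dots> = 1"
    using pd_mult[OF sm_diff[OF Csq] sm_diff[OF CG1], of 0 1] pd_mult[OF sm_diff[OF Csq1] sm_diff[OF CG], of 0 1]
    by (simp add: dsq dsq1 G0 sq0 sq10)
  finally have e2: "pderiv_dir (\<lambda>t. pderiv_dir \<Psi> t 1) 0 1 = 1" .
  have e1: "pderiv_dir \<Psi> 0 1 = 0" using fun_cong[OF P1, of 0] by (simp add: sq_def sq1_def)
  have e0: "\<Psi> 0 = 0" by (simp add: \<Psi>_def sq_def)
  have vG: "t > 1 \<Longrightarrow> G t = 0" for t unfolding G_def by (simp add: S_nonpos)
  have v: "\<Psi> t = 0 \<and> pderiv_dir \<Psi> t 1 = 0" if "t > 1" for t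
  proof
    show "\<Psi> t = 0" using vG[OF that] by (simp add: \<Psi>_def)
    show "pderiv_dir \<Psi> t 1 = 0"
      by (rule pd_zero_open[OF sm_diff[OF CP] open_greaterThan, of t 1])
        (use that vG in \<open>auto simp: \<Psi>_def\<close>)
  qed
  show ?thesis using CP e0 e1 e2 v by blast
qed


theorem mainTheorem2:
  fixes g :: "real^'m \<Rightarrow> real^'m"
  assumes "smooth g"
    and "compact (closure {x. g x \<noteq> 0})"
  shows "\<exists>\<phi>::(real^'m) \<times> real \<Rightarrow> (real^'m) \<times> real.
           smooth \<phi>
         \<and> (\<forall>x. snd x \<ge> 0 \<longrightarrow> divergence \<phi> x = 0)
         \<and> compact (closure {x. snd x \<ge> 0 \<and> \<phi> x \<noteq> 0})
         \<and> (\<forall>x'. \<phi> (x', 0) = 0)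
         \<and> (\<forall>x'. pderiv_dir \<phi> (x', 0) (0, 1) = (g x', 0))"
proof -
  obtain \<Psi> :: "real \<Rightarrow> real" where CP: "\<And>k. Ck k \<Psi>" and P0: "\<Psi> 0 = 0" and P10: "pderiv_dir \<Psi> 0 1 = 0"
    and P20: "pderiv_dir (\<lambda>t. pderiv_dir \<Psi> t 1) 0 1 = 1" and Pv: "\<And>t. t > 1 \<Longrightarrow> \<Psi> t = 0 \<and> pderiv_dir \<Psi> t 1 = 0"
    using Psi_exists by blast
  define \<Psi>1 where "\<Psi>1 = (\<lambda>t. pderiv_dir \<Psi> t 1)"
  have CP1: "Ck k \<Psi>1" for k unfolding \<Psi>1_def using Ck_pd[OF CP[of "Suc k"], of 1] by simp
  have Cg: "Ck k g" for k using assms(1) by (simp add: smooth_def)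
  define D where "D = (\<lambda>y. \<Sum>b\<in>Basis. pderiv_dir g y b \<bullet> b)"
  have CD: "Ck k D" for k
    unfolding D_def
    by (rule Ck_sum) (auto intro!: Ck_lin_out[OF bounded_linear_inner_left] Ck_pd[OF Cg])
  have L1: "bounded_linear (\<lambda>v::real^'m. (v, 0::real))"
    by (rule bounded_linear_Pair[OF bounded_linear_ident bounded_linear_zero])
  have L2: "bounded_linear (\<lambda>r::real. (0::real^'m, - r))"
    by (rule bounded_linear_Pair[OF bounded_linear_zero bounded_linear_minus[OF bounded_linear_ident]])
  define A where "A = (\<lambda>x::(real^'m) \<times> real. \<Psi>1 (snd x) *\<^sub>R (g (fst x), 0::real))"
  define B where "B = (\<lambda>x::(real^'m) \<times> real. \<Psi> (snd x) *\<^sub>R (0::real^'m, - D (fst x)))"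
  define \<phi> where "\<phi> = (\<lambda>x. A x + B x)"
  have Cgf: "Ck k (\<lambda>x::(real^'m) \<times> real. g (fst x))" for k by (rule Ck_comp[OF bounded_linear_fst Cg])
  have CDf: "Ck k (\<lambda>x::(real^'m) \<times> real. D (fst x))" for k by (rule Ck_comp[OF bounded_linear_fst CD])
  have CP1s: "Ck k (\<lambda>x::(real^'m) \<times> real. \<Psi>1 (snd x))" for k by (rule Ck_comp[OF bounded_linear_snd CP1])
  have CPs: "Ck k (\<lambda>x::(real^'m) \<times> real. \<Psi> (snd x))" for k by (rule Ck_comp[OF bounded_linear_snd CP])
  have Cg1: "Ck k (\<lambda>x::(real^'m) \<times> real. (g (fst x), 0::real))" for k
    using Ck_lin_out[OF L1 Cgf[of k]] by simp
  have CD1: "Ck k (\<lambda>x::(real^'m) \<times> real. (0::real^'m, - D (fst x)))" for k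
    using Ck_lin_out[OF L2 CDf[of k]] by simp
  have CA: "Ck k A" for k unfolding A_def by (rule Ck_scaleR[OF CP1s Cg1])
  have CB: "Ck k B" for k unfolding B_def by (rule Ck_scaleR[OF CPs CD1])
  have Cphi: "Ck k \<phi>" for k unfolding \<phi>_def by (rule Ck_add[OF CA CB])
  have dA: "pderiv_dir A x v = \<Psi>1 (snd x) *\<^sub>R (pderiv_dir g (fst x) (fst v), 0) + (snd v * pderiv_dir \<Psi>1 (snd x) 1) *\<^sub>R (g (fst x), 0)" for x v
  proof -
    have "pderiv_dir A x v = \<Psi>1 (snd x) *\<^sub>R pderiv_dir (\<lambda>x. (g (fst x), 0::real)) x v + pderiv_dir (\<lambda>x. \<Psi>1 (snd x)) x v *\<^sub>R (g (fst x), 0)"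
      unfolding A_def by (rule pd_scaleR[OF sm_diff[OF CP1s] sm_diff[OF Cg1]])
    moreover have "pderiv_dir (\<lambda>x. (g (fst x), 0::real)) x v = (pderiv_dir g (fst x) (fst v), 0)"
      using pd_lin_out[OF L1 sm_diff[OF Cgf], of x v] pd_comp[OF bounded_linear_fst sm_diff[OF Cg], of x v] by simp
    moreover have "pderiv_dir (\<lambda>x. \<Psi>1 (snd x)) x v = snd v * pderiv_dir \<Psi>1 (snd x) 1"
      using pd_comp[OF bounded_linear_snd sm_diff[OF CP1], of x v] pd_real[OF sm_diff[OF CP1], of "snd x" "snd v"] by simp
    ultimately show ?thesis by simp
  qed
  have dB: "pderiv_dir B x v = \<Psi> (snd x) *\<^sub>R (0, - pderiv_dir D (fst x) (fst v)) + (snd v * \<Psi>1 (snd x)) *\<^sub>R (0, - D (fst x))" for x v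
  proof -
    have "pderiv_dir B x v = \<Psi> (snd x) *\<^sub>R pderiv_dir (\<lambda>x. (0::real^'m, - D (fst x))) x v + pderiv_dir (\<lambda>x. \<Psi> (snd x)) x v *\<^sub>R (0, - D (fst x))"
      unfolding B_def by (rule pd_scaleR[OF sm_diff[OF CPs] sm_diff[OF CD1]])
    moreover have "pderiv_dir (\<lambda>x. (0::real^'m, - D (fst x))) x v = (0, - pderiv_dir D (fst x) (fst v))"
      using pd_lin_out[OF L2 sm_diff[OF CDf], of x v] pd_comp[OF bounded_linear_fst sm_diff[OF CD], of x v] by simp
    moreover have "pderiv_dir (\<lambda>x. \<Psi> (snd x)) x v = snd v * \<Psi>1 (snd x)"
      using pd_comp[OF bounded_linear_snd sm_diff[OF CP], of x v] pd_real[OF sm_diff[OF CP], of "snd x" "snd v"]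
      by (simp add: \<Psi>1_def)
    ultimately show ?thesis by simp
  qed
  have dphi: "pderiv_dir \<phi> x v = pderiv_dir A x v + pderiv_dir B x v" for x v
    unfolding \<phi>_def by (rule pd_add[OF sm_diff[OF CA] sm_diff[OF CB]])
  have lg: "linear (pderiv_dir g y)" for y by (rule pd_linear[OF sm_diff[OF Cg]])
  have lD: "linear (pderiv_dir D y)" for y by (rule pd_linear[OF sm_diff[OF CD]])
  have g0: "pderiv_dir g y 0 = 0" for y using linear_0[OF lg] .
  have D0: "pderiv_dir D y 0 = 0" for y using linear_0[OF lD] .
  have div: "divergence \<phi> x = 0" for x
  proof -
    have "divergence \<phi> x = (\<Sum>i\<in>Basis. pderiv_dir \<phi> x (i, 0) \<bullet> (i, 0)) + (\<Sum>i\<in>Basis. pderiv_dir \<phi> x (0, i) \<bullet> (0, i))"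
      unfolding divergence_def by (rule sum_Basis_prod_real)
    also have "\<dots> = (\<Sum>i\<in>Basis. \<Psi>1 (snd x) * (pderiv_dir g (fst x) i \<bullet> i)) + (- \<Psi>1 (snd x) * D (fst x))"
      by (simp add: dphi dA dB g0 D0 inner_Pair)
    also have "\<dots> = 0" by (simp add: D_def sum_distrib_left sum_negf)
    finally show ?thesis .
  qed
  have bd: "\<phi> (x', 0) = 0" for x' by (simp add: \<phi>_def A_def B_def \<Psi>1_def P0 P10 zero_prod_def)
  have dn: "pderiv_dir \<phi> (x', 0) (0, 1) = (g x', 0)" for x'
    by (simp add: dphi dA dB g0 D0 P0 P10 P20 \<Psi>1_def)
  define K where "K = closure {x. g x \<noteq> 0}"
  have sub: "{x. snd x \<ge> 0 \<and> \<phi> x \<noteq> 0} \<subseteq> K \<times> {0..1}"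
  proof
    fix x assume x: "x \<in> {x. snd x \<ge> 0 \<and> \<phi> x \<noteq> 0}"
    have t1: "snd x \<le> 1"
    proof (rule ccontr)
      assume "\<not> snd x \<le> 1"
      then have "\<Psi> (snd x) = 0" "\<Psi>1 (snd x) = 0" using Pv[of "snd x"] by (auto simp: \<Psi>1_def)
      then have "\<phi> x = 0" by (simp add: \<phi>_def A_def B_def zero_prod_def)
      then show False using x by simp
    qed
    have yK: "fst x \<in> K"
    proof (rule ccontr)
      assume nK: "fst x \<notin> K"
      have oK: "open (- K)" unfolding K_def by (simp add: open_Compl)
      have z: "g z = 0" if "z \<in> - K" for z
      proof -
        have "z \<notin> K" using that by simp
        then have "z \<notin> {x. g x \<noteq> 0}" unfolding K_def by (rule contra_subsetD[OF closure_subset])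
        then show ?thesis by simp
      qed
      have "pderiv_dir g (fst x) b = 0" for b
        by (rule pd_zero_open[OF sm_diff[OF Cg] oK]) (use nK z in simp_all)
      then have "D (fst x) = 0" by (simp add: D_def)
      moreover have "g (fst x) = 0" using z nK by simp
      ultimately have "\<phi> x = 0" by (simp add: \<phi>_def A_def B_def zero_prod_def)
      then show False using x by simp
    qed
    show "x \<in> K \<times> {0..1}" using x t1 yK by (simp add: mem_Times_iff)
  qed
  have cK: "compact (K \<times> {0..1::real})" using assms(2) unfolding K_def by (intro compact_Times compact_Icc)
  have "closure {x. snd x \<ge> 0 \<and> \<phi> x \<noteq> 0} \<subseteq> K \<times> {0..1}"
    by (rule closure_minimal[OF sub compact_imp_closed[OF cK]])
  then have "compact (closure {x. snd x \<ge> 0 \<and> \<phi> x \<noteq> 0})"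
    using compact_Int_closed[OF cK closed_closure, of "{x. snd x \<ge> 0 \<and> \<phi> x \<noteq> 0}"] by (simp only: Int_absorb1)
  moreover have "smooth \<phi>" using Cphi by (simp add: smooth_def)
  ultimately show ?thesis using div bd dn by blast
qed

end
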